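(* Let $d\ge1$, let $P$ be a complex polynomial of degree $d$ and $Z\subset D_1$. Then $$\sup_{D_1}|P|\le K_d(Z)\sup_Z|P|,\qquad K_d(Z)=\inf_{\alpha>0}\Big(\frac{6e^{1/\alpha}}{c_{d,\alpha}(Z)}\Big)^d$$ (with the convention that a term with $c_{d,\alpha}(Z)=0$ equals $+\infty$).
   Context: $D_r=\{z\in\mathbb C:|z|<r\}$. For $Z\subset D_1$, $d\in\mathbb N$ and $\alpha>0$, the $(d,\alpha)$-Cartan measure is $c_{d,\alpha}(Z)=\inf\{(\sum_{j=1}^q r_j^\alpha)^{1/\alpha}:\ Z\text{ is covered by } q\le d \text{ disks of radii } r_1,\dots,r_q>0\}$. *)

theory Defs
  imports "HOL-Analysis.Analysis" "HOL-Computational_Algebra.Polynomial" "HOL-Library.Extended_Real"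
begin

definition cartan_measure :: "nat \<Rightarrow> real \<Rightarrow> complex set \<Rightarrow> real" where
  "cartan_measure d \<alpha> Z = Inf {(\<Sum>j<q. r j powr \<alpha>) powr (1 / \<alpha>) | q r c.
      q \<le> d \<and> (\<forall>j<q. r j > 0) \<and> Z \<subseteq> (\<Union>j<q. ball (c j) (r j))}"

definition K_const :: "nat \<Rightarrow> complex set \<Rightarrow> ereal" where
  "K_const d Z = (INF \<alpha>\<in>{0<..}. (if cartan_measure d \<alpha> Z = 0 then \<infinity>
      else ereal ((6 * exp (1 / \<alpha>) / cartan_measure d \<alpha> Z) ^ d)))"

end

theory Submission
  imports Defs "HOL-Computational_Algebra.Fundamental_Theorem_Algebra"
begin


lemma exp_fact_bound:
  fixes x :: real assumes "x \<ge> 0"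
  shows "x ^ n / fact n \<le> exp x"
proof -
  have s: "summable (\<lambda>n. x^n /\<^sub>R fact n)" using exp_converges sums_summable by blast
  have "exp x = suminf (\<lambda>n. x^n /\<^sub>R fact n)" using exp_converges sums_unique by blast
  moreover have "sum (\<lambda>n. x^n /\<^sub>R fact n) {n} \<le> suminf (\<lambda>n. x^n /\<^sub>R fact n)"
    by (rule sum_le_suminf[OF s]) (use assms in auto)
  ultimately show ?thesis by (simp add: divide_inverse mult.commute)
qed

lemma greedy:
  fixes \<rho> :: "nat \<Rightarrow> real" and A :: "complex multiset"
  assumes mono: "\<And>i j. i \<le> j \<Longrightarrow> \<rho> i \<le> \<rho> j" and nn: "\<And>i. \<rho> i \<ge> 0"
  shows "\<exists>L :: (complex \<times> nat) list. sum_list (map snd L) = size A \<and> (\<forall>p\<in>set L. snd p \<ge> 1) \<and>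
     (\<forall>z k. k \<ge> 1 \<longrightarrow> size (filter_mset (\<lambda>a. dist z a < \<rho> k) A) \<ge> k \<longrightarrow>
        (\<exists>p\<in>set L. k \<le> snd p \<and> dist z (fst p) < 2 * \<rho> (snd p)))"
proof (induction "size A" arbitrary: A rule: less_induct)
  case less
  show ?case
  proof (cases "A = {#}")
    case True
    then show ?thesis by (intro exI[of _ "[]"]) auto
  next
    case False
    then obtain a0 where a0: "a0 \<in># A" by blast
    define S where "S = {k. 1 \<le> k \<and> k \<le> size A \<and> (\<exists>c. size (filter_mset (\<lambda>a. dist c a \<le> \<rho> k) A) \<ge> k)}"
    have finS: "finite S" unfolding S_def by (rule finite_subset[of _ "{..size A}"]) auto
    have "1 \<in> S" unfolding S_def
    proof (safe)
      show "1 \<le> size A" using a0 by (cases A) auto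
      have "a0 \<in># filter_mset (\<lambda>a. dist a0 a \<le> \<rho> 1) A" using a0 nn by simp
      then have "size (filter_mset (\<lambda>a. dist a0 a \<le> \<rho> 1) A) \<noteq> 0"
        by (metis empty_iff set_mset_empty size_eq_0_iff_empty)
      then show "\<exists>c. 1 \<le> size (filter_mset (\<lambda>a. dist c a \<le> \<rho> 1) A)"
        by (intro exI[of _ a0]) linarith
    qed
    define k1 where "k1 = Max S"
    have k1S: "k1 \<in> S" unfolding k1_def using finS \<open>1 \<in> S\<close> by (intro Max_in) auto
    have k1max: "\<And>k. k \<in> S \<Longrightarrow> k \<le> k1" unfolding k1_def using finS by auto
    from k1S obtain c1 where c1: "size (filter_mset (\<lambda>a. dist c1 a \<le> \<rho> k1) A) \<ge> k1" and k1ge: "k1 \<ge> 1"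
      unfolding S_def by auto
    define B where "B = filter_mset (\<lambda>a. dist c1 a \<le> \<rho> k1) A"
    define A' where "A' = filter_mset (\<lambda>a. \<not> dist c1 a \<le> \<rho> k1) A"
    have AB: "A = B + A'" unfolding A'_def B_def by simp
    have "size B \<ge> k1" using c1 B_def by simp
    hence "size A' < size A" using AB k1ge by simp
    from less(1)[OF this] obtain L where L1: "sum_list (map snd L) = size A'" and L2: "\<forall>p\<in>set L. snd p \<ge> 1"
      and L3: "\<forall>z k. k \<ge> 1 \<longrightarrow> size (filter_mset (\<lambda>a. dist z a < \<rho> k) A') \<ge> k \<longrightarrow>
        (\<exists>p\<in>set L. k \<le> snd p \<and> dist z (fst p) < 2 * \<rho> (snd p))" by blast
    show ?thesis
    proof (intro exI[of _ "(c1, size B) # L"] conjI allI impI)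
      show "sum_list (map snd ((c1, size B) # L)) = size A" using L1 AB by simp
      show "\<forall>p\<in>set ((c1, size B) # L). 1 \<le> snd p" using L2 \<open>size B \<ge> k1\<close> k1ge by auto
      fix z k assume k1: "1 \<le> k" and kc: "k \<le> size (filter_mset (\<lambda>a. dist z a < \<rho> k) A)"
      have "k \<le> size A" using kc size_filter_mset_lesseq le_trans by blast
      moreover have "size (filter_mset (\<lambda>a. dist z a < \<rho> k) A) \<le> size (filter_mset (\<lambda>a. dist z a \<le> \<rho> k) A)"
        by (intro size_mset_mono filter_mset_mono_strong) auto
      ultimately have "k \<in> S" unfolding S_def using k1 kc by (auto intro!: exI[of _ z])
      hence kk1: "k \<le> k1" by (rule k1max)
      show "\<exists>p\<in>set ((c1, size B) # L). k \<le> snd p \<and> dist z (fst p) < 2 * \<rho> (snd p)"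
      proof (cases "size (filter_mset (\<lambda>a. dist z a < \<rho> k) A') \<ge> k")
        case True
        then show ?thesis using L3 k1 by auto
      next
        case False
        have "filter_mset (\<lambda>a. dist z a < \<rho> k) A = filter_mset (\<lambda>a. dist z a < \<rho> k) B + filter_mset (\<lambda>a. dist z a < \<rho> k) A'"
          using AB by simp
        hence "k \<le> size (filter_mset (\<lambda>a. dist z a < \<rho> k) B) + size (filter_mset (\<lambda>a. dist z a < \<rho> k) A')"
          using kc by (metis size_union)
        hence "size (filter_mset (\<lambda>a. dist z a < \<rho> k) B) \<noteq> 0" using False by linarith
        hence "filter_mset (\<lambda>a. dist z a < \<rho> k) B \<noteq> {#}" by (metis size_empty)
        then obtain p where "p \<in># filter_mset (\<lambda>a. dist z a < \<rho> k) B" by blast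
        hence p1: "dist z p < \<rho> k" and p2: "dist c1 p \<le> \<rho> k1" unfolding B_def by auto
        have "\<rho> k \<le> \<rho> k1" "\<rho> k1 \<le> \<rho> (size B)" using mono kk1 \<open>size B \<ge> k1\<close> by auto
        moreover have "dist z c1 \<le> dist z p + dist c1 p" by (metis dist_commute dist_triangle)
        ultimately have "dist z c1 < 2 * \<rho> (size B)" using p1 p2 by linarith
        then show ?thesis using kk1 \<open>size B \<ge> k1\<close> by auto
      qed
    qed
  qed
qed

lemma prod_mset_nonneg':
  fixes f :: "'a \<Rightarrow> real"
  shows "(\<And>x. f x \<ge> 0) \<Longrightarrow> (\<Prod>a\<in>#A. f a) \<ge> 0"
  by (induction A) auto

lemma prod_bound:
  fixes \<rho> :: "nat \<Rightarrow> real" and A :: "complex multiset"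
  assumes mono: "\<And>i j. i \<le> j \<Longrightarrow> \<rho> i \<le> \<rho> j" and nn: "\<And>i. \<rho> i \<ge> 0"
    and cnt: "\<And>k. k \<ge> 1 \<Longrightarrow> size (filter_mset (\<lambda>a. dist z a < \<rho> k) A) < k"
  shows "(\<Prod>k=1..size A. \<rho> k) \<le> (\<Prod>a\<in>#A. dist z a)"
  using cnt
proof (induction "size A" arbitrary: A)
  case 0
  then show ?case by simp
next
  case (Suc n)
  have "size (filter_mset (\<lambda>a. dist z a < \<rho> (Suc n)) A) < size A" using Suc by auto
  hence "filter_mset (\<lambda>a. \<not> dist z a < \<rho> (Suc n)) A \<noteq> {#}"
    by (metis add.right_neutral less_irrefl multiset_partition size_union)
  then obtain a where a: "a \<in># A" "\<rho> (Suc n) \<le> dist z a" by auto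
  define A' where "A' = A - {#a#}"
  have AA: "A = add_mset a A'" using a A'_def by simp
  have sA: "n = size A'" using Suc AA by simp
  have "\<And>k. k \<ge> 1 \<Longrightarrow> size (filter_mset (\<lambda>a. dist z a < \<rho> k) A') < k"
  proof -
    fix k :: nat assume "k \<ge> 1"
    have "size (filter_mset (\<lambda>a. dist z a < \<rho> k) A') \<le> size (filter_mset (\<lambda>a. dist z a < \<rho> k) A)"
      using AA by (intro size_mset_mono multiset_filter_mono) auto
    then show "size (filter_mset (\<lambda>a. dist z a < \<rho> k) A') < k" using Suc.prems[OF \<open>k \<ge> 1\<close>] by linarith
  qed
  from Suc.hyps(1)[OF sA this] have IH: "(\<Prod>k=1..n. \<rho> k) \<le> (\<Prod>a\<in>#A'. dist z a)" using sA by simp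
  have "(\<Prod>k=1..size A. \<rho> k) = \<rho> (Suc n) * (\<Prod>k=1..n. \<rho> k)"
    using Suc.hyps(2)[symmetric] by (simp add: prod.cl_ivl_Suc mult.commute)
  also have "\<dots> \<le> dist z a * (\<Prod>a\<in>#A'. dist z a)"
    by (intro mult_mono a IH) (auto intro: prod_nonneg nn prod_mset_nonneg')
  also have "\<dots> = (\<Prod>a\<in>#A. dist z a)" using AA by simp
  finally show ?case .
qed



lemma fact_prod_real: "(\<Prod>k=1..m. real k) = fact m"
  by (induction m) (auto simp: prod.cl_ivl_Suc)

lemma rho_prod:
  fixes h \<alpha> :: real and n :: nat assumes "h > 0" "\<alpha> > 0"
  shows "(h / exp (1/\<alpha>)) ^ n \<le> (\<Prod>k=1..n. h * (real k / real n) powr (1/\<alpha>))"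
proof (cases "n = 0")
  case True then show ?thesis by simp
next
  case False
  have f: "(\<Prod>k=1..n. real k) = fact n" by (rule fact_prod_real)
  have "(\<Prod>k=1..n. h * (real k / real n) powr (1/\<alpha>)) = h ^ n * (\<Prod>k=1..n. real k / real n) powr (1/\<alpha>)"
    by (simp add: prod.distrib prod_powr_distrib)
  also have "(\<Prod>k=1..n. real k / real n) = fact n / real n ^ n"
    using f by (simp add: prod_dividef del: of_nat_prod)
  finally have eq: "(\<Prod>k=1..n. h * (real k / real n) powr (1/\<alpha>)) = h ^ n * (fact n / real n ^ n) powr (1/\<alpha>)" .
  have "real n ^ n / fact n \<le> exp (real n)" by (rule exp_fact_bound) simp
  hence le: "exp (- real n) \<le> fact n / real n ^ n" using False
    by (simp add: exp_minus field_simps)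
  have "exp (- real n) powr (1/\<alpha>) = exp (- real n / \<alpha>)" by (simp add: powr_def)
  also have "\<dots> = exp (real n * (- (1/\<alpha>)))" by simp
  also have "\<dots> = exp (- (1/\<alpha>)) ^ n" by (rule exp_of_nat_mult)
  also have "\<dots> = (1 / exp (1/\<alpha>)) ^ n" by (simp add: exp_minus inverse_eq_divide)
  finally have "(1 / exp (1/\<alpha>)) ^ n \<le> (fact n / real n ^ n) powr (1/\<alpha>)"
    using powr_mono2[of "1/\<alpha>" "exp (- real n)" "fact n / real n ^ n"] le assms by simp
  hence "h ^ n * (1 / exp (1/\<alpha>)) ^ n \<le> h ^ n * (fact n / real n ^ n) powr (1/\<alpha>)"
    using assms by (intro mult_left_mono) auto
  then show ?thesis using eq by (simp add: power_divide)
qed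

lemma cartan_facts:
  assumes "d \<ge> 1" "Z \<subseteq> ball 0 1" "\<alpha> > 0"
  shows "0 \<le> cartan_measure d \<alpha> Z" "cartan_measure d \<alpha> Z \<le> 1"
    "\<And>q r c. q \<le> d \<Longrightarrow> (\<forall>j<q. r j > 0) \<Longrightarrow> Z \<subseteq> (\<Union>j<q. ball (c j) (r j)) \<Longrightarrow>
        cartan_measure d \<alpha> Z \<le> (\<Sum>j<q. r j powr \<alpha>) powr (1 / \<alpha>)"
proof -
  let ?S = "{(\<Sum>j<q. r j powr \<alpha>) powr (1 / \<alpha>) | q r c.
      q \<le> d \<and> (\<forall>j<q. r j > 0) \<and> Z \<subseteq> (\<Union>j<q. ball (c j) (r j))}"
  have bdd: "bdd_below ?S" by (rule bdd_belowI[of _ 0]) auto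
  have one: "1 \<in> ?S"
    using assms by (intro CollectI exI[of _ 1] exI[of _ "\<lambda>_. 1"] exI[of _ "\<lambda>_. 0"]) auto
  hence ne: "?S \<noteq> {}" by auto
  show "0 \<le> cartan_measure d \<alpha> Z" unfolding cartan_measure_def
    by (rule cInf_greatest[OF ne]) auto
  show "cartan_measure d \<alpha> Z \<le> 1" unfolding cartan_measure_def
    by (rule cInf_lower[OF one bdd])
  fix q r c assume "q \<le> d" "\<forall>j<q. r j > 0" "Z \<subseteq> (\<Union>j<q. ball (c j) (r j))"
  then show "cartan_measure d \<alpha> Z \<le> (\<Sum>j<q. r j powr \<alpha>) powr (1 / \<alpha>)" unfolding cartan_measure_def
    by (intro cInf_lower[OF _ bdd]) blast
qed

lemma norm_prod_mset: "norm (\<Prod>a\<in>#A. f a) = (\<Prod>a\<in>#A. norm (f a :: complex))"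
  by (induction A) (auto simp: norm_mult)

lemma prod_mset_mono'':
  fixes f g :: "'a \<Rightarrow> real"
  shows "(\<And>x. x \<in># A \<Longrightarrow> 0 \<le> f x \<and> f x \<le> g x) \<Longrightarrow> 0 \<le> (\<Prod>a\<in>#A. f a) \<and> (\<Prod>a\<in>#A. f a) \<le> (\<Prod>a\<in>#A. g a)"
proof (induction A)
  case empty then show ?case by simp
next
  case (add x A)
  have "f x \<le> g x" "0 \<le> f x" using add.prems by auto
  moreover have "0 \<le> (\<Prod>a\<in>#A. f a) \<and> (\<Prod>a\<in>#A. f a) \<le> (\<Prod>a\<in>#A. g a)" using add by auto
  ultimately show ?case by (simp add: mult_mono)
qed

lemma prod_mset_mono':
  fixes f g :: "'a \<Rightarrow> real"
  shows "(\<And>x. x \<in># A \<Longrightarrow> 0 \<le> f x \<and> f x \<le> g x) \<Longrightarrow> (\<Prod>a\<in>#A. f a) \<le> (\<Prod>a\<in>#A. g a)"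
  using prod_mset_mono'' by blast

lemma poly_factor:
  fixes P :: "complex poly"
  shows "poly P x = lead_coeff P * (\<Prod>r\<in>#proots P. (x - r))"
proof -
  have "poly P x = poly (smult (lead_coeff P) (\<Prod>x\<in>#proots P. [:-x, 1:])) x"
    by (simp add: complex_poly_decompose_multiset)
  also have "\<dots> = lead_coeff P * (\<Prod>r\<in>#proots P. (x - r))"
    by (simp add: poly_prod_mset)
  finally show ?thesis .
qed



lemma length_le_sum_snd: "(\<forall>p\<in>set L. snd p \<ge> (1::nat)) \<Longrightarrow> length L \<le> sum_list (map snd L)"
  by (induction L) auto

lemma key:
  fixes P :: "complex poly"
  assumes d1: "d \<ge> 1" and dP: "degree P = d" and Zb: "Z \<subseteq> ball 0 1" and a0: "\<alpha> > 0"
    and h0: "0 < h" and hc: "h < cartan_measure d \<alpha> Z / 2" and w: "norm w < 1"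
  shows "\<exists>z\<in>Z. cmod (poly P w) \<le> (3 * exp (1/\<alpha>) / h) ^ d * cmod (poly P z)"
proof -
  define E where "E = exp (1/\<alpha>)"
  define R where "R = proots P"
  define N where "N = filter_mset (\<lambda>r. norm r \<le> 2) R"
  define F where "F = filter_mset (\<lambda>r. \<not> norm r \<le> 2) R"
  define n where "n = size N"
  have RNF: "R = N + F" unfolding N_def F_def by simp
  have sR: "size R = d" unfolding R_def using dP by (simp add: size_proots_complex)
  have nd: "n + size F = d" using RNF sR n_def by simp
  define \<rho> where "\<rho> k = h * (real k / real n) powr (1/\<alpha>)" for k :: nat
  have mono: "\<And>i j. i \<le> j \<Longrightarrow> \<rho> i \<le> \<rho> j"
    unfolding \<rho>_def using h0 a0
    by (intro mult_left_mono powr_mono2) (auto intro!: divide_right_mono)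
  have nn: "\<And>i. \<rho> i \<ge> 0" unfolding \<rho>_def using h0 by simp
  obtain L where L1: "sum_list (map snd L) = n" and L2: "\<forall>p\<in>set L. snd p \<ge> 1"
    and L3: "\<forall>z k. k \<ge> 1 \<longrightarrow> size (filter_mset (\<lambda>a. dist z a < \<rho> k) N) \<ge> k \<longrightarrow>
        (\<exists>p\<in>set L. k \<le> snd p \<and> dist z (fst p) < 2 * \<rho> (snd p))"
    using greedy[where \<rho>=\<rho> and A=N, OF mono nn] n_def by blast
  define q where "q = length L"
  define r where "r j = 2 * \<rho> (snd (L ! j))" for j
  define cc where "cc j = fst (L ! j)" for j
  have qd: "q \<le> d" using length_le_sum_snd[OF L2] L1 nd q_def by simp
  have snd_le: "\<And>j. j < q \<Longrightarrow> 1 \<le> snd (L ! j) \<and> snd (L ! j) \<le> n"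
  proof -
    fix j assume "j < q"
    hence m: "L ! j \<in> set L" using q_def by simp
    have "snd (L ! j) \<le> sum_list (map snd L)"
      using m by (simp add: member_le_sum_list)
    then show "1 \<le> snd (L ! j) \<and> snd (L ! j) \<le> n" using L1 L2 m by auto
  qed
  have rpos: "\<forall>j<q. r j > 0"
  proof (intro allI impI)
    fix j assume "j < q"
    with snd_le have "1 \<le> snd (L ! j)" "snd (L ! j) \<le> n" by auto
    then show "r j > 0" unfolding r_def \<rho>_def using h0 by auto
  qed
  have rpow: "r j powr \<alpha> = (2*h) powr \<alpha> * (real (snd (L ! j)) / real n)" for j
  proof -
    have "r j = (2*h) * (real (snd (L ! j)) / real n) powr (1/\<alpha>)" unfolding r_def \<rho>_def by simp
    hence "r j powr \<alpha> = (2*h) powr \<alpha> * ((real (snd (L ! j)) / real n) powr (1/\<alpha>)) powr \<alpha>"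
      using h0 by (simp add: powr_mult)
    also have "((real (snd (L ! j)) / real n) powr (1/\<alpha>)) powr \<alpha> = real (snd (L ! j)) / real n"
      using a0 by (simp add: powr_powr)
    finally show ?thesis .
  qed
  have "(\<Sum>j<q. r j powr \<alpha>) = (2*h) powr \<alpha> * ((\<Sum>j<q. real (snd (L ! j))) / real n)"
    by (simp add: rpow sum_distrib_left sum_divide_distrib)
  also have "(\<Sum>j<q. real (snd (L ! j))) = real n"
  proof -
    have "sum_list (map snd L) = (\<Sum>j<q. snd (L ! j))"
      by (simp add: sum_list_sum_nth q_def atLeast0LessThan)
    then show ?thesis using L1 by (metis of_nat_sum)
  qed
  finally have "(\<Sum>j<q. r j powr \<alpha>) \<le> (2*h) powr \<alpha>"
    using h0 by (cases "n = 0") auto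
  hence meas: "(\<Sum>j<q. r j powr \<alpha>) powr (1/\<alpha>) \<le> 2 * h"
    using powr_mono2[of "1/\<alpha>" "(\<Sum>j<q. r j powr \<alpha>)" "(2*h) powr \<alpha>"] a0 h0
    by (simp add: powr_powr sum_nonneg)
  have "\<not> Z \<subseteq> (\<Union>j<q. ball (cc j) (r j))"
  proof
    assume "Z \<subseteq> (\<Union>j<q. ball (cc j) (r j))"
    hence "cartan_measure d \<alpha> Z \<le> (\<Sum>j<q. r j powr \<alpha>) powr (1/\<alpha>)"
      using cartan_facts(3)[OF d1 Zb a0 qd rpos] by blast
    with meas hc show False by linarith
  qed
  then obtain z where zZ: "z \<in> Z" and zn: "z \<notin> (\<Union>j<q. ball (cc j) (r j))" by blast
  have zout: "dist (cc j) z \<ge> r j" if "j < q" for j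
  proof -
    have "\<not> dist (cc j) z < r j" using zn that by auto
    then show ?thesis by linarith
  qed
  have cnt: "\<And>k. k \<ge> 1 \<Longrightarrow> size (filter_mset (\<lambda>a. dist z a < \<rho> k) N) < k"
  proof (rule ccontr)
    fix k :: nat assume k1: "k \<ge> 1" and "\<not> size (filter_mset (\<lambda>a. dist z a < \<rho> k) N) < k"
    then obtain p where p: "p \<in> set L" "dist z (fst p) < 2 * \<rho> (snd p)" using L3 by force
    then obtain j where j: "j < q" "L ! j = p" using q_def by (metis in_set_conv_nth)
    from zout[OF j(1)] p j show False unfolding r_def cc_def by (simp add: dist_commute)
  qed
  have prodN: "(h / E) ^ n \<le> (\<Prod>a\<in>#N. dist z a)"
    using rho_prod[OF h0 a0, of n] prod_bound[where \<rho>=\<rho> and A=N and z=z, OF mono nn cnt] n_def unfolding \<rho>_def E_def by simp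
  have zb: "norm z < 1" using zZ Zb by auto
  have PN: "\<And>x. cmod (poly P x) = cmod (lead_coeff P) * ((\<Prod>a\<in>#N. cmod (x - a)) * (\<Prod>a\<in>#F. cmod (x - a)))"
    by (simp add: poly_factor norm_mult norm_prod_mset R_def[symmetric] RNF)
  have wN: "(\<Prod>a\<in>#N. cmod (w - a)) \<le> 3 ^ n"
  proof -
    have "(\<Prod>a\<in>#N. cmod (w - a)) \<le> (\<Prod>a\<in>#N. 3)"
    proof (rule prod_mset_mono')
      fix a assume "a \<in># N"
      hence "norm a \<le> 2" unfolding N_def by simp
      moreover have "cmod (w - a) \<le> norm w + norm a" by (rule norm_triangle_ineq4)
      ultimately show "0 \<le> cmod (w - a) \<and> cmod (w - a) \<le> 3" using w by auto
    qed
    then show ?thesis using n_def by simp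
  qed
  have wF: "(\<Prod>a\<in>#F. cmod (w - a)) \<le> 3 ^ size F * (\<Prod>a\<in>#F. cmod (z - a))"
  proof -
    have "(\<Prod>a\<in>#F. cmod (w - a)) \<le> (\<Prod>a\<in>#F. 3 * cmod (z - a))"
    proof (rule prod_mset_mono')
      fix a assume "a \<in># F"
      hence a2: "norm a > 2" unfolding F_def by simp
      have "cmod (w - a) \<le> norm w + norm a" by (rule norm_triangle_ineq4)
      moreover have "norm a - norm z \<le> cmod (z - a)"
        by (metis norm_minus_commute norm_triangle_ineq2)
      ultimately show "0 \<le> cmod (w - a) \<and> cmod (w - a) \<le> 3 * cmod (z - a)" using w zb a2 by auto
    qed
    also have "(\<Prod>a\<in>#F. 3 * cmod (z - a)) = 3 ^ size F * (\<Prod>a\<in>#F. cmod (z - a))"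
      by (induction F) auto
    finally show ?thesis .
  qed
  have Fnn: "0 \<le> (\<Prod>a\<in>#F. cmod (z - a))" by (rule prod_mset_nonneg') simp
  have Nnn: "0 \<le> (\<Prod>a\<in>#N. cmod (w - a))" by (rule prod_mset_nonneg') simp
  have Fwnn: "0 \<le> (\<Prod>a\<in>#F. cmod (w - a))" by (rule prod_mset_nonneg') simp
  have hE: "h \<le> E"
  proof -
    have "cartan_measure d \<alpha> Z \<le> 1" using cartan_facts(2)[OF d1 Zb a0] .
    moreover have "1 \<le> E" unfolding E_def using a0 by simp
    ultimately show ?thesis using hc by linarith
  qed
  define lc where "lc = cmod (lead_coeff P)"
  define PF where "PF = (\<Prod>a\<in>#F. cmod (z - a))"
  have lc0: "lc \<ge> 0" unfolding lc_def by simp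
  have A1: "(\<Prod>a\<in>#N. cmod (w - a)) * (\<Prod>a\<in>#F. cmod (w - a)) \<le> 3 ^ n * (3 ^ size F * PF)"
    unfolding PF_def using wN wF Fwnn by (intro mult_mono) auto
  have "cmod (poly P w) \<le> lc * (3 ^ n * (3 ^ size F * PF))"
    unfolding PN lc_def[symmetric] using A1 lc0 by (rule mult_left_mono)
  also have "\<dots> = 3 ^ d * (lc * PF)"
  proof -
    have "(3::real) ^ n * 3 ^ size F = 3 ^ d" using nd by (metis power_add)
    then show ?thesis by (simp add: algebra_simps)
  qed
  finally have step1: "cmod (poly P w) \<le> 3 ^ d * (lc * PF)" .
  have step2: "lc * PF \<le> (E / h) ^ n * cmod (poly P z)"
  proof -
    have "(h / E) ^ n * (lc * PF) \<le> (\<Prod>a\<in>#N. dist z a) * (lc * PF)"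
      using prodN lc0 Fnn PF_def by (intro mult_right_mono) auto
    also have "\<dots> = cmod (poly P z)" unfolding PN lc_def PF_def by (simp add: dist_norm)
    finally have i1: "(h / E) ^ n * (lc * PF) \<le> cmod (poly P z)" .
    have one: "(E / h) ^ n * (h / E) ^ n = 1" using h0 hE by (simp add: power_mult_distrib[symmetric])
    have "(E / h) ^ n * ((h / E) ^ n * (lc * PF)) \<le> (E / h) ^ n * cmod (poly P z)"
      using i1 h0 hE by (intro mult_left_mono) auto
    moreover have "(E / h) ^ n * ((h / E) ^ n * (lc * PF)) = lc * PF"
      using one by (metis mult.assoc mult_1)
    ultimately show ?thesis by simp
  qed
  have step3: "(E / h) ^ n \<le> (E / h) ^ d" using hE h0 nd by (intro power_increasing) auto
  have Pz0: "0 \<le> cmod (poly P z)" by simp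
  have "3 ^ d * (lc * PF) \<le> 3 ^ d * ((E / h) ^ n * cmod (poly P z))"
    using step2 by (rule mult_left_mono) simp
  also have "\<dots> \<le> 3 ^ d * ((E / h) ^ d * cmod (poly P z))"
    using step3 Pz0 by (intro mult_left_mono mult_right_mono) auto
  also have "\<dots> = (3 * E / h) ^ d * cmod (poly P z)"
  proof -
    have "(3::real) ^ d * (E / h) ^ d = (3 * E / h) ^ d" by (metis power_mult_distrib times_divide_eq_right)
    then show ?thesis by (metis mult.assoc)
  qed
  finally have "3 ^ d * (lc * PF) \<le> (3 * E / h) ^ d * cmod (poly P z)" .
  with step1 have "cmod (poly P w) \<le> (3 * E / h) ^ d * cmod (poly P z)" by linarith
  then show ?thesis using zZ E_def by blast
qed



lemma poly_bound:
  fixes P :: "complex poly"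
  assumes "norm x < 1"
  shows "cmod (poly P x) \<le> (\<Sum>i\<le>degree P. cmod (coeff P i))"
proof -
  have "cmod (poly P x) \<le> (\<Sum>i\<le>degree P. cmod (coeff P i * x ^ i))"
    unfolding poly_altdef by (rule norm_sum)
  also have "\<dots> \<le> (\<Sum>i\<le>degree P. cmod (coeff P i))"
  proof (rule sum_mono)
    fix i
    have "cmod (x ^ i) \<le> 1" using assms by (simp add: norm_power power_le_one)
    then show "cmod (coeff P i * x ^ i) \<le> cmod (coeff P i)"
      by (simp add: norm_mult mult_left_le)
  qed
  finally show ?thesis .
qed

lemma per_alpha:
  fixes P :: "complex poly"
  assumes d1: "d \<ge> 1" and dP: "degree P = d" and Zb: "Z \<subseteq> ball 0 1" and a0: "\<alpha> > 0"
    and c0: "cartan_measure d \<alpha> Z > 0" and y: "\<And>z. z \<in> Z \<Longrightarrow> cmod (poly P z) \<le> y"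
    and w: "norm w < 1"
  shows "cmod (poly P w) \<le> (6 * exp (1/\<alpha>) / cartan_measure d \<alpha> Z) ^ d * y"
proof -
  define c where "c = cartan_measure d \<alpha> Z"
  define E where "E = exp (1/\<alpha>)"
  have ev: "eventually (\<lambda>h. cmod (poly P w) \<le> (3 * E / h) ^ d * y) (at_left (c/2))"
  proof -
    have "eventually (\<lambda>h. h \<in> {0<..<c/2}) (at_left (c/2))"
      using c0 c_def by (intro eventually_at_left_real) simp
    then show ?thesis
    proof (rule eventually_mono)
      fix h assume h: "h \<in> {0<..<c/2}"
      then obtain z where z: "z \<in> Z" and le: "cmod (poly P w) \<le> (3 * E / h) ^ d * cmod (poly P z)"
        using key[OF d1 dP Zb a0 _ _ w, of h] c_def E_def by auto
      have "(3 * E / h) ^ d * cmod (poly P z) \<le> (3 * E / h) ^ d * y"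
        using y[OF z] h E_def by (intro mult_left_mono) auto
      with le show "cmod (poly P w) \<le> (3 * E / h) ^ d * y" by linarith
    qed
  qed
  have lim: "((\<lambda>h. (3 * E / h) ^ d * y) \<longlongrightarrow> (3 * E / (c/2)) ^ d * y) (at_left (c/2))"
    using c0 c_def by (intro tendsto_intros) auto
  have "cmod (poly P w) \<le> (3 * E / (c/2)) ^ d * y"
    by (rule tendsto_le[OF trivial_limit_at_left_real lim tendsto_const ev])
  also have "3 * E / (c/2) = 6 * E / c" by simp
  finally show ?thesis unfolding c_def E_def .
qed

theorem mainTheorem7:
  fixes P :: "complex poly" and d :: nat and Z :: "complex set"
  assumes "d \<ge> 1" and "degree P = d" and "Z \<subseteq> ball 0 1"
  shows "K_const d Z = \<infinity> \<or>
    (SUP z\<in>ball 0 1. ereal (cmod (poly P z))) \<le> K_const d Z * (SUP z\<in>Z. ereal (cmod (poly P z)))"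
proof (cases "\<forall>\<alpha>>0. cartan_measure d \<alpha> Z = 0")
  case True
  have "K_const d Z = \<infinity>" unfolding K_const_def
  proof (rule antisym)
    show "(INF \<alpha>\<in>{0<..}. (if cartan_measure d \<alpha> Z = 0 then \<infinity>
      else ereal ((6 * exp (1 / \<alpha>) / cartan_measure d \<alpha> Z) ^ d))) \<le> \<infinity>" by simp
    show "\<infinity> \<le> (INF \<alpha>\<in>{0<..}. (if cartan_measure d \<alpha> Z = 0 then \<infinity>
      else ereal ((6 * exp (1 / \<alpha>) / cartan_measure d \<alpha> Z) ^ d)))"
      using True by (intro INF_greatest) auto
  qed
  then show ?thesis by simp
next
  case False
  then obtain \<alpha>0 where a0: "\<alpha>0 > 0" and cne: "cartan_measure d \<alpha>0 Z \<noteq> 0" by auto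
  have c0: "cartan_measure d \<alpha>0 Z > 0" using cartan_facts(1)[OF assms(1,3) a0] cne by linarith
  define M0 where "M0 = (\<Sum>i\<le>degree P. cmod (coeff P i))"
  have bnd: "\<And>x. norm x < 1 \<Longrightarrow> cmod (poly P x) \<le> M0" unfolding M0_def by (rule poly_bound)
  obtain z0 where z0: "z0 \<in> Z"
    using key[OF assms a0, of "cartan_measure d \<alpha>0 Z / 4" 0] c0 by auto
  define X where "X = (SUP z\<in>ball 0 1. ereal (cmod (poly P z)))"
  define Y where "Y = (SUP z\<in>Z. ereal (cmod (poly P z)))"
  have Xub: "X \<le> ereal M0" unfolding X_def using bnd by (intro SUP_least) auto
  have Xlb: "ereal 0 \<le> X" unfolding X_def
    by (rule order_trans[OF _ SUP_upper[of 0]]) auto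
  have Yub: "Y \<le> ereal M0" unfolding Y_def using bnd assms(3) by (intro SUP_least) auto
  have Ylb: "ereal 0 \<le> Y" unfolding Y_def
    by (rule order_trans[OF _ SUP_upper[OF z0]]) auto
  obtain x where x: "X = ereal x" using Xub Xlb by (cases X) auto
  obtain y where y: "Y = ereal y" using Yub Ylb by (cases Y) auto
  have x0: "x \<ge> 0" using Xlb x by simp
  have y0: "y \<ge> 0" using Ylb y by simp
  have yb: "\<And>z. z \<in> Z \<Longrightarrow> cmod (poly P z) \<le> y"
  proof -
    fix z assume "z \<in> Z"
    hence "ereal (cmod (poly P z)) \<le> Y" unfolding Y_def by (rule SUP_upper)
    then show "cmod (poly P z) \<le> y" using y by simp
  qed
  have xb: "\<And>\<alpha>. \<alpha> > 0 \<Longrightarrow> cartan_measure d \<alpha> Z > 0 \<Longrightarrow>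
      x \<le> (6 * exp (1/\<alpha>) / cartan_measure d \<alpha> Z) ^ d * y"
  proof -
    fix \<alpha> :: real assume a: "\<alpha> > 0" "cartan_measure d \<alpha> Z > 0"
    have "X \<le> ereal ((6 * exp (1/\<alpha>) / cartan_measure d \<alpha> Z) ^ d * y)" unfolding X_def
      using per_alpha[OF assms a yb] by (intro SUP_least) auto
    then show "x \<le> (6 * exp (1/\<alpha>) / cartan_measure d \<alpha> Z) ^ d * y" using x by simp
  qed
  have "X \<le> K_const d Z * Y"
  proof (cases "y = 0")
    case True
    have "x \<le> 0" using xb[OF a0 c0] True by simp
    then show ?thesis using x y True x0 by (simp add: zero_ereal_def[symmetric])
  next
    case False
    hence ypos: "y > 0" using y0 by simp
    have "ereal (x / y) \<le> K_const d Z" unfolding K_const_def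
    proof (rule INF_greatest)
      fix \<alpha> :: real assume "\<alpha> \<in> {0<..}"
      hence a: "\<alpha> > 0" by simp
      show "ereal (x / y) \<le> (if cartan_measure d \<alpha> Z = 0 then \<infinity>
          else ereal ((6 * exp (1 / \<alpha>) / cartan_measure d \<alpha> Z) ^ d))"
      proof (cases "cartan_measure d \<alpha> Z = 0")
        case True then show ?thesis by simp
      next
        case False
        hence cp: "cartan_measure d \<alpha> Z > 0" using cartan_facts(1)[OF assms(1,3) a] by linarith
        have "x / y \<le> (6 * exp (1 / \<alpha>) / cartan_measure d \<alpha> Z) ^ d"
          using xb[OF a cp] ypos by (simp add: divide_le_eq)
        then show ?thesis using False by simp
      qed
    qed
    hence "ereal (x / y) * ereal y \<le> K_const d Z * ereal y"
      by (rule ereal_mult_right_mono) (simp add: y0)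
    then show ?thesis using x y ypos by simp
  qed
  then show ?thesis unfolding X_def Y_def by simp
qed


end
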